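(* Let $m<M$ be real numbers and let $X$ be a random variable taking values in $[m,M]$, either discrete (taking finitely many values $x_1,\dots,x_n\in[m,M]$ with probabilities $p_1,\dots,p_n$) or continuous (with probability density $f$ on $[m,M]$). Let $\mu_1'$ be its mean and $\mu_2,\mu_3,\mu_4$ its second, third and fourth central moments, and assume $\mu_2\neq(\mu_1'-m)(M-\mu_1')$ and $\mu_2>0$. Then $$\mu_4-\mu_2^2-\frac{\mu_3^2}{\mu_2}\le (\mu_1'-m)(M-\mu_1')\Big(\frac{M-m}{4}\Big)^2\le\frac{(M-m)^4}{64}.$$
   Context: The mean is $\mu_1'=\sum_{i=1}^n p_i x_i$ (discrete case) or $\mu_1'=\int_m^M x f(x)\,dx$ (continuous case), where $\sum p_i=1$, resp. $\int_m^M f(x)\,dx=1$. The $r$-th central moment is $\mu_r=\sum_{i=1}^n p_i (x_i-\mu_1')^r$, resp. $\mu_r=\int_m^M (x-\mu_1')^r f(x)\,dx$. *)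

theory Defs
  imports "HOL-Analysis.Analysis"
begin

text \<open>Discrete case: values x 0, ..., x (n-1) with probabilities p 0, ..., p (n-1).\<close>

definition disc_mean :: "nat \<Rightarrow> (nat \<Rightarrow> real) \<Rightarrow> (nat \<Rightarrow> real) \<Rightarrow> real" where
  "disc_mean n p x = (\<Sum>i<n. p i * x i)"

definition disc_cmoment :: "nat \<Rightarrow> (nat \<Rightarrow> real) \<Rightarrow> (nat \<Rightarrow> real) \<Rightarrow> nat \<Rightarrow> real" where
  "disc_cmoment n p x r = (\<Sum>i<n. p i * (x i - disc_mean n p x) ^ r)"

definition cont_mean :: "real \<Rightarrow> real \<Rightarrow> (real \<Rightarrow> real) \<Rightarrow> real" where
  "cont_mean m M f = integral {m..M} (\<lambda>t. t * f t)"

definition cont_cmoment :: "real \<Rightarrow> real \<Rightarrow> (real \<Rightarrow> real) \<Rightarrow> nat \<Rightarrow> real" where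
  "cont_cmoment m M f r = integral {m..M} (\<lambda>t. (t - cont_mean m M f) ^ r * f t)"

end

theory Submission imports Defs begin

lemma core:
  fixes u2 u3 u4 a b A :: real
  assumes "u2 > 0" "u4 + 2*a*u3 + (a^2+2*b)*u2 + b^2 \<le> A"
  shows "u4 - u2^2 - u3^2/u2 \<le> A"
proof -
  have e: "u4 + 2*a*u3 + (a^2+2*b)*u2 + b^2 = (u4 - u2^2 - u3^2/u2) + u2*(a+u3/u2)^2 + (b+u2)^2"
    using assms(1) by (simp add: field_simps power2_eq_square)
  have "0 \<le> u2*(a+u3/u2)^2 + (b+u2)^2" using assms(1) by simp
  then show ?thesis using assms(2) e by linarith
qed

lemma pt_eq:
  fixes y a b :: real
  shows "(y^2 + a*y + b)^2 = y^4 + 2*a*y^3 + (a^2+2*b)*y^2 + 2*a*b*y + b^2"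
  by algebra

lemma pt_le:
  fixes m M u t :: real
  defines "d \<equiv> u - (M+m)/2" and "h \<equiv> (M-m)/2"
  assumes "m \<le> t" "t \<le> M"
  shows "((t-u)^2 + (3*d/2)*(t-u) + (d^2-h^2)/2)^2 \<le> h^2*(h^2-d^2)/4 + (-(h^2*d/2))*(t-u)"
proof -
  have "h^2*(h^2-d^2)/4 + (-(h^2*d/2))*(t-u) - ((t-u)^2 + (3*d/2)*(t-u) + (d^2-h^2)/2)^2
     = (t-m)*(M-t)*(t - (M+m)/2 - d/2)^2"
    unfolding d_def h_def by (simp add: power2_eq_square power4_eq_xxxx algebra_simps divide_simps)
  moreover have "0 \<le> (t-m)*(M-t)*(t - (M+m)/2 - d/2)^2" using assms by simp
  ultimately show ?thesis by linarith
qed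

lemma A0_eq:
  fixes m M u :: real
  shows "((M-m)/2)^2*(((M-m)/2)^2-(u - (M+m)/2)^2)/4 = (u - m) * (M - u) * ((M - m) / 4)\<^sup>2"
  by (simp add: field_simps power2_eq_square)

lemma second: fixes m M u :: real shows "(u - m) * (M - u) * ((M - m) / 4)\<^sup>2 \<le> (M - m) ^ 4 / 64"
proof -
  have "(u - m) * (M - u) \<le> (M-m)^2/4" using zero_le_square[of "u - (M+m)/2"] by (simp add: power2_eq_square algebra_simps divide_simps)
  then have "(u - m) * (M - u) * ((M - m) / 4)\<^sup>2 \<le> (M-m)^2/4 * ((M - m) / 4)\<^sup>2"
    by (intro mult_right_mono) auto
  also have "\<dots> = (M - m) ^ 4 / 64" by (simp add: field_simps power2_eq_square power4_eq_xxxx)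
  finally show ?thesis .
qed

lemma disc_part:
  fixes m M :: real and n p x
  assumes hp: "\<forall>i<n. 0 \<le> p i \<and> x i \<in> {m..M}" and s1: "(\<Sum>i<n. p i) = 1"
    and pos: "disc_cmoment n p x 2 > 0"
  shows "disc_cmoment n p x 4 - (disc_cmoment n p x 2)\<^sup>2
         - (disc_cmoment n p x 3)\<^sup>2 / disc_cmoment n p x 2
         \<le> (disc_mean n p x - m) * (M - disc_mean n p x) * ((M - m) / 4)\<^sup>2"
proof -
  define u where "u = disc_mean n p x"
  define d where "d = u - (M+m)/2"
  define h where "h = (M-m)/(2::real)"
  define a where "a = 3*d/2"
  define b where "b = (d^2-h^2)/2"
  define A0 where "A0 = h^2*(h^2-d^2)/4"
  define B0 where "B0 = -(h^2*d/2)"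
  define c where "c k = (\<Sum>i<n. p i * (x i - u)^k)" for k
  have c0: "c 0 = 1" using s1 by (simp add: c_def)
  have c1: "c 1 = 0"
  proof -
    have "c 1 = (\<Sum>i<n. p i * x i) - u * (\<Sum>i<n. p i)"
      by (simp add: c_def algebra_simps sum_subtractf sum_distrib_left)
    then show ?thesis using s1 by (simp add: u_def disc_mean_def)
  qed
  have ck: "disc_cmoment n p x k = c k" for k by (simp add: disc_cmoment_def c_def u_def)
  have E: "(\<Sum>i<n. p i * ((x i - u)^2 + a*(x i - u) + b)^2)
      = c 4 + 2*a*c 3 + (a^2+2*b)*c 2 + 2*a*b*c 1 + b^2*c 0"
  proof -
    have "c 4 + 2*a*c 3 + (a^2+2*b)*c 2 + 2*a*b*c 1 + b^2*c 0 =
      (\<Sum>i<n. p i * (x i - u)^4 + 2*a*(p i * (x i - u)^3) + (a^2+2*b)*(p i * (x i - u)^2)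
         + 2*a*b*(p i * (x i - u)^1) + b^2*(p i * (x i - u)^0))"
      by (simp only: c_def sum.distrib sum_distrib_left)
    also have "\<dots> = (\<Sum>i<n. p i * ((x i - u)^2 + a*(x i - u) + b)^2)"
      by (rule sum.cong[OF refl]) algebra
    finally show ?thesis by simp
  qed
  have "(\<Sum>i<n. p i * ((x i - u)^2 + a*(x i - u) + b)^2) \<le> (\<Sum>i<n. p i * (A0 + B0*(x i - u)))"
  proof (rule sum_mono)
    fix i assume "i \<in> {..<n}"
    then have "0 \<le> p i" "m \<le> x i" "x i \<le> M" using hp by auto
    then show "p i * ((x i - u)^2 + a*(x i - u) + b)^2 \<le> p i * (A0 + B0*(x i - u))"
      using pt_le[of m "x i" M u] unfolding a_def b_def A0_def B0_def d_def h_def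
      by (intro mult_left_mono) auto
  qed
  also have "\<dots> = (\<Sum>i<n. A0 * (p i * (x i - u)^0) + B0 * (p i * (x i - u)^1))"
    by (rule sum.cong[OF refl]) algebra
  also have "\<dots> = A0 * c 0 + B0 * c 1"
    by (simp only: c_def sum.distrib sum_distrib_left)
  finally have "c 4 + 2*a*c 3 + (a^2+2*b)*c 2 + b^2 \<le> A0" using E c0 c1 by simp
  then have "c 4 - (c 2)^2 - (c 3)^2 / c 2 \<le> A0" using core[of "c 2"] pos ck by auto
  moreover have "A0 = (u - m) * (M - u) * ((M - m) / 4)\<^sup>2"
    using A0_eq[of M m u] by (simp add: A0_def h_def d_def)
  ultimately show ?thesis by (simp add: ck u_def)
qed


lemma int_poly:
  fixes f g :: "real \<Rightarrow> real"
  assumes g: "continuous_on UNIV g" and nn: "\<forall>t\<in>{m..M}. 0 \<le> f t" and fi: "f integrable_on {m..M}"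
  shows "(\<lambda>t. g t * f t) integrable_on {m..M}"
proof -
  have gc: "continuous_on {m..M} g" using g continuous_on_subset by blast
  have "(\<lambda>t. g t * f t) absolutely_integrable_on {m..M}"
  proof (rule absolutely_integrable_bounded_measurable_product_real)
    show "g \<in> borel_measurable (lebesgue_on {m..M})"
      by (rule continuous_imp_measurable_on_sets_lebesgue[OF gc]) simp
    show "{m..M} \<in> sets lebesgue" by simp
    show "bounded (g ` {m..M})" by (rule compact_imp_bounded[OF compact_continuous_image[OF gc]]) simp
    show "f absolutely_integrable_on {m..M}" using nonnegative_absolutely_integrable_1[OF fi] nn by blast
  qed
  then show ?thesis using absolutely_integrable_on_def by blast
qed

lemma cont_part:
  fixes m M :: real and f :: "real \<Rightarrow> real"
  assumes nn: "\<forall>t\<in>{m..M}. 0 \<le> f t" and fi: "f integrable_on {m..M}" and s1: "integral {m..M} f = 1"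
    and pos: "cont_cmoment m M f 2 > 0"
  shows "cont_cmoment m M f 4 - (cont_cmoment m M f 2)\<^sup>2
         - (cont_cmoment m M f 3)\<^sup>2 / cont_cmoment m M f 2
         \<le> (cont_mean m M f - m) * (M - cont_mean m M f) * ((M - m) / 4)\<^sup>2"
proof -
  define u where "u = cont_mean m M f"
  define d where "d = u - (M+m)/2"
  define h where "h = (M-m)/(2::real)"
  define a where "a = 3*d/2"
  define b where "b = (d^2-h^2)/2"
  define A0 where "A0 = h^2*(h^2-d^2)/4"
  define B0 where "B0 = -(h^2*d/2)"
  define c where "c k = integral {m..M} (\<lambda>t. (t - u)^k * f t)" for k
  have hk: "((\<lambda>t. (t - u)^k * f t) has_integral c k) {m..M}" for k
    unfolding c_def
    by (rule integrable_integral, rule int_poly[OF _ nn fi]) (intro continuous_intros)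
  have ff: "(f has_integral 1) {m..M}" using fi s1 integrable_integral by fastforce
  have tf: "((\<lambda>t. t * f t) has_integral u) {m..M}"
    unfolding u_def cont_mean_def
    by (rule integrable_integral, rule int_poly[OF _ nn fi]) (intro continuous_intros)
  have c0: "c 0 = 1" using s1 by (simp add: c_def)
  have c1: "c 1 = 0"
  proof -
    have A: "((\<lambda>t. t * f t - u * f t) has_integral (u - u * 1)) {m..M}"
      by (intro has_integral_diff has_integral_mult_right tf ff)
    have B: "((\<lambda>t. t * f t - u * f t) has_integral c 1) {m..M}"
      using hk[of 1] by (rule has_integral_eq[rotated]) (simp add: algebra_simps)
    have "c 1 = u - u * 1" by (rule has_integral_unique[OF B A])
    then show ?thesis by simp
  qed
  have ck: "cont_cmoment m M f k = c k" for k by (simp add: cont_cmoment_def c_def u_def)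
  have I1: "((\<lambda>t. (t - u)^4 * f t + 2*a*((t - u)^3 * f t) + (a^2+2*b)*((t - u)^2 * f t)
       + 2*a*b*((t - u)^1 * f t) + b^2*((t - u)^0 * f t)) has_integral
      (c 4 + 2*a*c 3 + (a^2+2*b)*c 2 + 2*a*b*c 1 + b^2*c 0)) {m..M}"
    by (rule has_integral_add has_integral_mult_right hk has_integral_diff tf ff)+
  have I1': "((\<lambda>t. ((t - u)^2 + a*(t - u) + b)^2 * f t) has_integral
      (c 4 + 2*a*c 3 + (a^2+2*b)*c 2 + 2*a*b*c 1 + b^2*c 0)) {m..M}"
      proof (rule has_integral_eq[OF _ I1])
    fix t :: real
    show "(t - u)^4 * f t + 2*a*((t - u)^3 * f t) + (a^2+2*b)*((t - u)^2 * f t)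
       + 2*a*b*((t - u)^1 * f t) + b^2*((t - u)^0 * f t) = ((t - u)^2 + a*(t - u) + b)^2 * f t"
      unfolding pt_eq by (simp add: algebra_simps)
  qed
  have I2: "((\<lambda>t. A0 * ((t - u)^0 * f t) + B0 * ((t - u)^1 * f t)) has_integral
      (A0 * c 0 + B0 * c 1)) {m..M}"
    by (rule has_integral_add has_integral_mult_right hk has_integral_diff tf ff)+
  have "c 4 + 2*a*c 3 + (a^2+2*b)*c 2 + 2*a*b*c 1 + b^2*c 0 \<le> A0 * c 0 + B0 * c 1"
  proof (rule has_integral_le[OF I1' I2])
    fix t assume "t \<in> {m..M}"
    then have "0 \<le> f t" "m \<le> t" "t \<le> M" using nn by auto
    then have "((t - u)^2 + a*(t - u) + b)^2 * f t \<le> (A0 + B0*(t - u)) * f t"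
      using pt_le[of m t M u] unfolding a_def b_def A0_def B0_def d_def h_def
      by (intro mult_right_mono) auto
    then show "((t - u)^2 + a*(t - u) + b)^2 * f t \<le> A0 * ((t - u)^0 * f t) + B0 * ((t - u)^1 * f t)"
      by (simp add: algebra_simps)
  qed
  then have "c 4 + 2*a*c 3 + (a^2+2*b)*c 2 + b^2 \<le> A0" using c0 c1 by simp
  then have "c 4 - (c 2)^2 - (c 3)^2 / c 2 \<le> A0" using core[of "c 2"] pos ck by auto
  moreover have "A0 = (u - m) * (M - u) * ((M - m) / 4)\<^sup>2"
    using A0_eq[of M m u] by (simp add: A0_def h_def d_def)
  ultimately show ?thesis by (simp add: ck u_def)
qed

theorem corollary2p4:
  fixes m M :: real
  assumes "m < M"
  shows
   "(\<forall>(n::nat) (p::nat \<Rightarrow> real) (x::nat \<Rightarrow> real).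
       (\<forall>i<n. 0 \<le> p i \<and> x i \<in> {m..M}) \<and> (\<Sum>i<n. p i) = 1 \<and>
       disc_cmoment n p x 2 \<noteq> (disc_mean n p x - m) * (M - disc_mean n p x) \<and>
       disc_cmoment n p x 2 > 0 \<longrightarrow>
       disc_cmoment n p x 4 - (disc_cmoment n p x 2)\<^sup>2
         - (disc_cmoment n p x 3)\<^sup>2 / disc_cmoment n p x 2
         \<le> (disc_mean n p x - m) * (M - disc_mean n p x) * ((M - m) / 4)\<^sup>2 \<and>
       (disc_mean n p x - m) * (M - disc_mean n p x) * ((M - m) / 4)\<^sup>2
         \<le> (M - m) ^ 4 / 64)
  \<and>
   (\<forall>f :: real \<Rightarrow> real.
       (\<forall>t\<in>{m..M}. 0 \<le> f t) \<and> f integrable_on {m..M} \<and> integral {m..M} f = 1 \<and>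
       cont_cmoment m M f 2 \<noteq> (cont_mean m M f - m) * (M - cont_mean m M f) \<and>
       cont_cmoment m M f 2 > 0 \<longrightarrow>
       cont_cmoment m M f 4 - (cont_cmoment m M f 2)\<^sup>2
         - (cont_cmoment m M f 3)\<^sup>2 / cont_cmoment m M f 2
         \<le> (cont_mean m M f - m) * (M - cont_mean m M f) * ((M - m) / 4)\<^sup>2 \<and>
       (cont_mean m M f - m) * (M - cont_mean m M f) * ((M - m) / 4)\<^sup>2
         \<le> (M - m) ^ 4 / 64)"
proof (intro conjI allI impI)
  fix n p x
  assume H: "(\<forall>i<n. 0 \<le> p i \<and> x i \<in> {m..M}) \<and> (\<Sum>i<n. p i) = 1 \<and>
       disc_cmoment n p x 2 \<noteq> (disc_mean n p x - m) * (M - disc_mean n p x) \<and>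
       disc_cmoment n p x 2 > 0"
  show "disc_cmoment n p x 4 - (disc_cmoment n p x 2)\<^sup>2
         - (disc_cmoment n p x 3)\<^sup>2 / disc_cmoment n p x 2
         \<le> (disc_mean n p x - m) * (M - disc_mean n p x) * ((M - m) / 4)\<^sup>2"
    using H by (intro disc_part) auto
  show "(disc_mean n p x - m) * (M - disc_mean n p x) * ((M - m) / 4)\<^sup>2 \<le> (M - m) ^ 4 / 64"
    by (rule second)
next
  fix f :: "real \<Rightarrow> real"
  assume H: "(\<forall>t\<in>{m..M}. 0 \<le> f t) \<and> f integrable_on {m..M} \<and> integral {m..M} f = 1 \<and>
       cont_cmoment m M f 2 \<noteq> (cont_mean m M f - m) * (M - cont_mean m M f) \<and>
       cont_cmoment m M f 2 > 0"
  show "cont_cmoment m M f 4 - (cont_cmoment m M f 2)\<^sup>2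
         - (cont_cmoment m M f 3)\<^sup>2 / cont_cmoment m M f 2
         \<le> (cont_mean m M f - m) * (M - cont_mean m M f) * ((M - m) / 4)\<^sup>2"
    using H by (intro cont_part) auto
  show "(cont_mean m M f - m) * (M - cont_mean m M f) * ((M - m) / 4)\<^sup>2 \<le> (M - m) ^ 4 / 64"
    by (rule second)
qed

end
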